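(* Let $n\ge n'\ge 1$, let $p_1,\dots,p_n\ge 0$, and let $x_1,\dots,x_n$ and $x_{\{j\}\cup\{j'\}}$ ($j,j'\in\{1,\dots,n\}$) be reals with $x_{\{j\}\cup\{j'\}}=x_{\{j'\}\cup\{j\}}\ge 0$, $x_{\{j\}\cup\{j\}}=x_j\ge 0$, such that the $(n+1)\times(n+1)$ matrix $X$ indexed by $0,1,\dots,n$ with $X_{0,0}=1$, $X_{0,j}=X_{j,0}=x_j$, $X_{j,j'}=x_{\{j\}\cup\{j'\}}$ is positive semidefinite. Then for every subset $S\subseteq\{1,\dots,n'\}$, $$\sum_{j=1}^{n'}p_j\big(p_1x_{\{j\}\cup\{1\}}+\dots+p_jx_{\{j\}\cup\{j\}}\big)\ \ge\ \sum_{j\in\{1,\dots,n'\}\setminus S}x_jp_j^2+\frac12\Big(\sum_{j\in S}x_jp_j^2+\Big(\sum_{j\in S}x_jp_j\Big)^2\Big).$$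
   Context: This is the per-machine form of the constraints of the SDP relaxation: for a fixed machine $i$, $x_j$ stands for $x_{ij}$, $x_{\{j\}\cup\{j'\}}$ for $x_{\{ij\}\cup\{ij'\}}$, $p_j$ for $p_{ij}$, and $X$ is the moment matrix $X^{(i)}$. *)

theory Defs
  imports "HOL-Analysis.Analysis"
begin

definition psd_mat :: "nat \<Rightarrow> (nat \<Rightarrow> nat \<Rightarrow> real) \<Rightarrow> bool" where
  "psd_mat n X \<longleftrightarrow>
     (\<forall>i\<in>{0..n}. \<forall>j\<in>{0..n}. X i j = X j i) \<and>
     (\<forall>v :: nat \<Rightarrow> real. (\<Sum>i\<in>{0..n}. \<Sum>j\<in>{0..n}. v i * X i j * v j) \<ge> 0)"

definition moment_mat :: "(nat \<Rightarrow> real) \<Rightarrow> (nat \<Rightarrow> nat \<Rightarrow> real) \<Rightarrow> nat \<Rightarrow> nat \<Rightarrow> real" where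
  "moment_mat x y i j =
     (if i = 0 \<and> j = 0 then 1 else if i = 0 then x j else if j = 0 then x i else y i j)"

end

theory Submission
  imports Defs
begin

lemma double_sum_ind:
  fixes p :: "nat \<Rightarrow> real" and y :: "nat \<Rightarrow> nat \<Rightarrow> real"
  assumes "\<forall>j\<in>{1..n}. \<forall>j'\<in>{1..n}. y j j' = y j' j" and "m \<le> n"
  shows "2 * (\<Sum>j=1..m. p j * (\<Sum>k=1..j. p k * y j k))
     = (\<Sum>j=1..m. p j * p j * y j j) + (\<Sum>j=1..m. \<Sum>k=1..m. p j * p k * y j k)"
  using assms(2)
proof (induction m)
  case 0
  then show ?case by simp
next
  case (Suc m)
  have sym: "\<And>k. k \<in> {1..m} \<Longrightarrow> y k (Suc m) = y (Suc m) k"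
    using assms(1) Suc.prems by auto
  have e1: "(\<Sum>j=1..Suc m. \<Sum>k=1..Suc m. p j * p k * y j k)
     = (\<Sum>j=1..m. \<Sum>k=1..m. p j * p k * y j k) + (\<Sum>j=1..m. p j * p (Suc m) * y j (Suc m))
       + (\<Sum>k=1..m. p (Suc m) * p k * y (Suc m) k) + p (Suc m) * p (Suc m) * y (Suc m) (Suc m)"
    by (simp add: sum.distrib)
  have e2: "(\<Sum>j=1..m. p j * p (Suc m) * y j (Suc m)) = (\<Sum>k=1..m. p (Suc m) * p k * y (Suc m) k)"
    by (rule sum.cong) (auto simp: sym)
  have e3: "p (Suc m) * (\<Sum>k=1..Suc m. p k * y (Suc m) k)
     = (\<Sum>k=1..m. p (Suc m) * p k * y (Suc m) k) + p (Suc m) * p (Suc m) * y (Suc m) (Suc m)"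
    by (simp add: sum_distrib_left algebra_simps)
  have e4: "(\<Sum>j=1..Suc m. p j * (\<Sum>k=1..j. p k * y j k))
     = (\<Sum>j=1..m. p j * (\<Sum>k=1..j. p k * y j k)) + p (Suc m) * (\<Sum>k=1..Suc m. p k * y (Suc m) k)"
    by simp
  have e5: "(\<Sum>j=1..Suc m. p j * p j * y j j) = (\<Sum>j=1..m. p j * p j * y j j) + p (Suc m) * p (Suc m) * y (Suc m) (Suc m)"
    by simp
  have IH: "2 * (\<Sum>j=1..m. p j * (\<Sum>k=1..j. p k * y j k))
     = (\<Sum>j=1..m. p j * p j * y j j) + (\<Sum>j=1..m. \<Sum>k=1..m. p j * p k * y j k)"
    using Suc by simp
  show ?case unfolding e4 e5 e1 e2 using IH e3 by (simp add: algebra_simps)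
qed

theorem lemma1:
  fixes n n' :: nat and p x :: "nat \<Rightarrow> real" and y :: "nat \<Rightarrow> nat \<Rightarrow> real"
    and S :: "nat set"
  assumes "1 \<le> n'" and "n' \<le> n"
    and "\<forall>j\<in>{1..n}. p j \<ge> 0"
    and "\<forall>j\<in>{1..n}. \<forall>j'\<in>{1..n}. y j j' = y j' j \<and> y j j' \<ge> 0"
    and "\<forall>j\<in>{1..n}. y j j = x j \<and> x j \<ge> 0"
    and "psd_mat n (moment_mat x y)"
    and "S \<subseteq> {1..n'}"
  shows "(\<Sum>j=1..n'. p j * (\<Sum>k=1..j. p k * y j k))
         \<ge> (\<Sum>j\<in>{1..n'} - S. x j * (p j)^2)
           + (1/2) * ((\<Sum>j\<in>S. x j * (p j)^2) + (\<Sum>j\<in>S. x j * p j)^2)"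
proof -
  define A where "A = {1..n'}"
  define s where "s = (\<Sum>j\<in>S. x j * p j)"
  define Q where "Q = (\<Sum>j\<in>S. \<Sum>k\<in>S. p j * p k * y j k)"
  define M where "M = moment_mat x y"
  define v where "v = (\<lambda>i. if i = 0 then - s else if i \<in> S then p i else 0)"
  have SA: "S \<subseteq> A" using assms(7) A_def by simp
  have Sn: "S \<subseteq> {1..n}" using assms(2,7) by auto
  have finS: "finite S" using SA A_def finite_subset by auto
  have S0: "0 \<notin> S" using assms(7) by auto
  have Sint: "{1..n} \<inter> S = S" using Sn by auto
  have restr: "\<And>g. (\<Sum>j\<in>{1..n}. g j * v j) = (\<Sum>j\<in>S. g j * p j)"
  proof -
    fix g :: "nat \<Rightarrow> real"
    have "(\<Sum>j\<in>{1..n}. g j * v j) = (\<Sum>j\<in>{1..n}. if j \<in> S then g j * p j else 0)"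
      by (rule sum.cong) (auto simp: v_def)
    also have "\<dots> = (\<Sum>j\<in>S. g j * p j)"
      using sum.inter_restrict[of "{1..n}" "\<lambda>j. g j * p j" S] Sint by simp
    finally show "(\<Sum>j\<in>{1..n}. g j * v j) = (\<Sum>j\<in>S. g j * p j)" .
  qed
  have restr2: "\<And>g. (\<Sum>j\<in>{1..n}. v j * g j) = (\<Sum>j\<in>S. p j * g j)"
    using restr by (simp add: mult.commute)
  have ins: "{0..n} = insert 0 {1..n}" by auto
  have psd: "0 \<le> (\<Sum>i\<in>{0..n}. \<Sum>j\<in>{0..n}. v i * M i j * v j)"
    using assms(6) unfolding psd_mat_def M_def by blast
  have row: "\<And>i. i \<in> {1..n} \<Longrightarrow> (\<Sum>j\<in>{0..n}. v i * M i j * v j)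
       = v i * x i * (- s) + v i * (\<Sum>j\<in>S. y i j * p j)"
  proof -
    fix i assume i: "i \<in> {1..n}"
    have "(\<Sum>j\<in>{0..n}. v i * M i j * v j) = v i * M i 0 * v 0 + (\<Sum>j\<in>{1..n}. (v i * M i j) * v j)"
      by (simp add: ins)
    also have "\<dots> = v i * x i * (- s) + (\<Sum>j\<in>S. (v i * M i j) * p j)"
      using i by (simp only: restr) (simp add: M_def moment_mat_def v_def)
    also have "(\<Sum>j\<in>S. (v i * M i j) * p j) = v i * (\<Sum>j\<in>S. y i j * p j)"
      unfolding sum_distrib_left by (rule sum.cong) (use i S0 in \<open>auto simp: M_def moment_mat_def\<close>)
    finally show "(\<Sum>j\<in>{0..n}. v i * M i j * v j) = v i * x i * (- s) + v i * (\<Sum>j\<in>S. y i j * p j)" .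
  qed
  have row0: "(\<Sum>j\<in>{0..n}. v 0 * M 0 j * v j) = s * s - s * s"
  proof -
    have "(\<Sum>j\<in>{0..n}. v 0 * M 0 j * v j) = v 0 * M 0 0 * v 0 + (\<Sum>j\<in>{1..n}. (v 0 * M 0 j) * v j)"
      by (simp add: ins)
    also have "\<dots> = s * s + (\<Sum>j\<in>S. (v 0 * M 0 j) * p j)"
      by (simp only: restr) (simp add: M_def moment_mat_def v_def)
    also have "(\<Sum>j\<in>S. (v 0 * M 0 j) * p j) = - s * s"
    proof -
      have "(\<Sum>j\<in>S. (v 0 * M 0 j) * p j) = (\<Sum>j\<in>S. - s * (x j * p j))"
        by (rule sum.cong) (use S0 in \<open>auto simp: M_def moment_mat_def v_def\<close>)
      also have "\<dots> = - s * s" by (simp add: s_def sum_negf sum_distrib_left[symmetric] del: mult_minus_left)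
      finally show ?thesis .
    qed
    finally show ?thesis by simp
  qed
  have "(\<Sum>i\<in>{0..n}. \<Sum>j\<in>{0..n}. v i * M i j * v j)
      = (s * s - s * s) + (\<Sum>i\<in>{1..n}. v i * x i * (- s) + v i * (\<Sum>j\<in>S. y i j * p j))"
  proof -
    have "(\<Sum>i\<in>{0..n}. \<Sum>j\<in>{0..n}. v i * M i j * v j)
       = (\<Sum>j\<in>{0..n}. v 0 * M 0 j * v j) + (\<Sum>i\<in>{1..n}. \<Sum>j\<in>{0..n}. v i * M i j * v j)"
      unfolding ins[of] by (subst sum.insert) auto
    also have "(\<Sum>i\<in>{1..n}. \<Sum>j\<in>{0..n}. v i * M i j * v j)
       = (\<Sum>i\<in>{1..n}. v i * x i * (- s) + v i * (\<Sum>j\<in>S. y i j * p j))"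
      by (rule sum.cong) (simp_all add: row)
    finally show ?thesis using row0 by simp
  qed
  also have "\<dots> = (\<Sum>i\<in>{1..n}. v i * (x i * (- s))) + (\<Sum>i\<in>{1..n}. v i * (\<Sum>j\<in>S. y i j * p j))"
    by (simp add: sum.distrib[symmetric] algebra_simps)
  also have "\<dots> = - s * s + Q"
  proof -
    have a: "(\<Sum>i\<in>{1..n}. v i * (x i * (- s))) = - s * s"
      unfolding restr2 s_def by (simp add: sum_distrib_right sum_negf algebra_simps)
    have b: "(\<Sum>i\<in>{1..n}. v i * (\<Sum>j\<in>S. y i j * p j)) = Q"
      unfolding restr2 Q_def by (simp add: sum_distrib_left algebra_simps)
    show ?thesis using a b by simp
  qed
  finally have keyQ: "s * s \<le> Q" using psd by simp
  have symm: "\<forall>j\<in>{1..n}. \<forall>j'\<in>{1..n}. y j j' = y j' j" using assms(4) by blast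
  have id: "2 * (\<Sum>j=1..n'. p j * (\<Sum>k=1..j. p k * y j k))
     = (\<Sum>j\<in>A. p j * p j * y j j) + (\<Sum>j\<in>A. \<Sum>k\<in>A. p j * p k * y j k)"
    using double_sum_ind[OF symm assms(2)] A_def by simp
  have An: "A \<subseteq> {1..n}" using A_def assms(2) by auto
  have nonneg: "\<And>j k. j \<in> A \<Longrightarrow> k \<in> A \<Longrightarrow> 0 \<le> p j * p k * y j k"
    using An assms(3,4) by (meson subsetD mult_nonneg_nonneg)
  have finA: "finite A" using A_def by simp
  have splitA: "\<And>f. (\<Sum>j\<in>A. f j) = (\<Sum>j\<in>S. f j) + (\<Sum>j\<in>A - S. f j)"
    by (metis SA finA add.commute sum.subset_diff)
  have D1: "(\<Sum>j\<in>S. \<Sum>k\<in>S. p j * p k * y j k) \<le> (\<Sum>j\<in>S. \<Sum>k\<in>A. p j * p k * y j k)"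
    by (rule sum_mono, rule sum_mono2) (use finA SA nonneg in auto)
  have D2: "(\<Sum>j\<in>A - S. p j * p j * y j j) \<le> (\<Sum>j\<in>A - S. \<Sum>k\<in>A. p j * p k * y j k)"
    by (rule sum_mono, rule member_le_sum) (use finA nonneg in auto)
  have D: "Q + (\<Sum>j\<in>A - S. p j * p j * y j j) \<le> (\<Sum>j\<in>A. \<Sum>k\<in>A. p j * p k * y j k)"
    using D1 D2 splitA[of "\<lambda>j. \<Sum>k\<in>A. p j * p k * y j k"] Q_def by linarith
  have conv: "\<And>B. B \<subseteq> A \<Longrightarrow> (\<Sum>j\<in>B. p j * p j * y j j) = (\<Sum>j\<in>B. x j * (p j)^2)"
    by (rule sum.cong) (use An assms(5) in \<open>auto simp: power2_eq_square\<close>)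
  have c1: "(\<Sum>j\<in>A. p j * p j * y j j) = (\<Sum>j\<in>S. x j * (p j)^2) + (\<Sum>j\<in>A - S. x j * (p j)^2)"
    using splitA[of "\<lambda>j. p j * p j * y j j"] conv[OF SA] conv[of "A - S"] by auto
  have c2: "(\<Sum>j\<in>A - S. p j * p j * y j j) = (\<Sum>j\<in>A - S. x j * (p j)^2)"
    using conv[of "A - S"] by auto
  have fin: "\<And>L a b D. 2 * L = a + b + D \<Longrightarrow> Q + b \<le> D \<Longrightarrow> s * s \<le> Q
     \<Longrightarrow> b + (1/2) * (a + s * s) \<le> (L::real)"
  proof -
    fix L a b D :: real
    assume h: "2 * L = a + b + D" "Q + b \<le> D" "s * s \<le> Q"
    define t where "t = s * s"
    have "2 * b + (a + t) \<le> 2 * L" using h t_def by linarith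
    then have "b + (1/2) * (a + t) \<le> L" by (simp add: field_simps)
    then show "b + (1/2) * (a + s * s) \<le> L" by (simp add: t_def)
  qed
  show ?thesis
    unfolding s_def[symmetric] power2_eq_square
    using fin[OF id[unfolded c1] D[unfolded c2] keyQ] unfolding A_def power2_eq_square .
qed

end
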